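(* Let $K$ be a virtual knot. Write $$F_K(t,s)=\sum_{[g]\neq[0]} a_{[g]}\,t^{[g]}+b\,t^{[0]},$$ with $a_{[g]},b\in\mathbb{Z}$, where the sum runs over equivalence classes different from the class of $0$. Then $$c_r(K)\ge\sum_{[g]\ne[0]}|a_{[g]}|.$$
   Context: The real crossing number $c_r(K)$ of a virtual knot $K$ is the minimum number of real crossings over all virtual knot diagrams representing $K$. The Gauss diagram of an oriented virtual knot diagram is built as follows. Take a counterclockwise-oriented circle. For each real crossing, join its two preimages by a chord directed from over- to undercrossing, labeled with the writhe $w(c)=\pm1$. Put $w(K)=\sum_c w(c)$. Let $d$ be a chord intersecting a chord $c$ (endpoints interleave). We say $d$ crosses $c$ from left to right if, viewing $c$ along its direction, the tail of $d$ lies on the left and its head on the right; right to left is the opposite. Let $r_1,\dots,r_n$ be the chords crossing $c$ from left to right and $l_1,\dots,l_m$ those crossing from right to left. Then $\mathrm{Ind}(c)=\sum_i w(r_i)-\sum_j w(l_j)$. Put $N=|\mathrm{Ind}(c)|$ and let $\phi$ be reduction mod $N$ into $\{0,\dots,N-1\}$ if $N\ge1$, and the identity if $N=0$. Define $$g_c(s)=\sum_i w(r_i)s^{\phi(\mathrm{Ind}(r_i))}-\sum_j w(l_j)s^{\phi(-\mathrm{Ind}(l_j))}.$$ Call Laurent polynomials $p,q\in\mathbb{Z}[s,s^{-1}]$ equivalent if $p(1)=q(1)$ and $p\equiv q\pmod{s^{|p(1)|}-1}$. Note that the class of $0$ is $\{0\}$. Write $t^{[p]}$ for the corresponding basis element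 of the free abelian group on equivalence classes. Then $$F_K(t,s)=\sum_c w(c)\,t^{[g_c(s)]}-w(K)\,t^{[0]},$$ summing over all real crossings of a diagram of $K$. This element does not depend on the chosen diagram of $K$. *)

theory Defs
  imports Main
begin

text \<open>A Gauss diagram is encoded by the cyclic sequence of chord endpoints met when
traversing the counterclockwise-oriented circle (starting at an arbitrary point).
An endpoint is a triple (label, is_tail, positive): is_tail = True means the endpoint is
the preimage of the overcrossing (tail of the chord), positive = True means writhe +1.\<close>

type_synonym endpt = "nat \<times> bool \<times> bool"
type_synonym gdiag = "endpt list"

definition gd_wf :: "gdiag \<Rightarrow> bool" where
  "gd_wf D \<longleftrightarrow> distinct (map (\<lambda>(l,t,s). (l,t)) D) \<and>
     (\<forall>l t s. (l,t,s) \<in> set D \<longrightarrow> (\<exists>s'. (l,True,s') \<in> set D \<and> (l,False,s') \<in> set D))"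

definition chords :: "gdiag \<Rightarrow> nat set" where
  "chords D = {l. \<exists>t s. (l,t,s) \<in> set D}"

definition wr :: "gdiag \<Rightarrow> nat \<Rightarrow> int" where
  "wr D c = (if (c,True,True) \<in> set D then 1 else -1)"

definition writhe :: "gdiag \<Rightarrow> int" where
  "writhe D = (\<Sum>c\<in>chords D. wr D c)"

definition pos :: "gdiag \<Rightarrow> nat \<Rightarrow> bool \<Rightarrow> nat" where
  "pos D l t = (THE i. i < length D \<and> fst (D!i) = l \<and> fst (snd (D!i)) = t)"

definition between :: "gdiag \<Rightarrow> nat \<Rightarrow> nat \<Rightarrow> bool" where
  "between D c k \<longleftrightarrow> min (pos D c True) (pos D c False) < k \<and> k < max (pos D c True) (pos D c False)"

text \<open>Position k lies on the right of chord c (viewed along its direction, tail to head).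
The counterclockwise arc from the tail to the head lies on the right.\<close>
definition on_right :: "gdiag \<Rightarrow> nat \<Rightarrow> nat \<Rightarrow> bool" where
  "on_right D c k \<longleftrightarrow> (between D c k \<longleftrightarrow> pos D c True < pos D c False)"

definition crosses_LR :: "gdiag \<Rightarrow> nat \<Rightarrow> nat \<Rightarrow> bool" where
  "crosses_LR D c d \<longleftrightarrow> d \<in> chords D \<and> d \<noteq> c \<and>
     \<not> on_right D c (pos D d True) \<and> on_right D c (pos D d False)"

definition crosses_RL :: "gdiag \<Rightarrow> nat \<Rightarrow> nat \<Rightarrow> bool" where
  "crosses_RL D c d \<longleftrightarrow> d \<in> chords D \<and> d \<noteq> c \<and>
     on_right D c (pos D d True) \<and> \<not> on_right D c (pos D d False)"

definition Ind :: "gdiag \<Rightarrow> nat \<Rightarrow> int" where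
  "Ind D c = (\<Sum>d\<in>{d. crosses_LR D c d}. wr D d) - (\<Sum>d\<in>{d. crosses_RL D c d}. wr D d)"

definition phi :: "int \<Rightarrow> int \<Rightarrow> int" where
  "phi N x = (if N \<ge> 1 then x mod N else x)"

section \<open>Laurent polynomials in s, as finitely supported coefficient functions\<close>

type_synonym lpoly = "int \<Rightarrow> int"

definition lfin :: "lpoly \<Rightarrow> bool" where
  "lfin p \<longleftrightarrow> finite {k. p k \<noteq> 0}"

definition lzero :: lpoly where "lzero = (\<lambda>_. 0)"

definition lev1 :: "lpoly \<Rightarrow> int" where
  "lev1 p = (\<Sum>k\<in>{k. p k \<noteq> 0}. p k)"

text \<open>p equivalent to q: p(1)=q(1) and (s^n - 1) divides p - q in Z[s,s^-1], n = |p(1)|.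
The coefficient of s^k in (s^n - 1) h is h(k-n) - h(k).\<close>
definition lp_equiv :: "lpoly \<Rightarrow> lpoly \<Rightarrow> bool" where
  "lp_equiv p q \<longleftrightarrow> lev1 p = lev1 q \<and>
     (\<exists>h. lfin h \<and> (\<forall>k. p k - q k = h (k - \<bar>lev1 p\<bar>) - h k))"

definition lcls :: "lpoly \<Rightarrow> lpoly set" where
  "lcls p = {q. lfin q \<and> lp_equiv p q}"

definition gpoly :: "gdiag \<Rightarrow> nat \<Rightarrow> lpoly" where
  "gpoly D c = (\<lambda>k.
     (\<Sum>d\<in>{d. crosses_LR D c d \<and> phi \<bar>Ind D c\<bar> (Ind D d) = k}. wr D d)
   - (\<Sum>d\<in>{d. crosses_RL D c d \<and> phi \<bar>Ind D c\<bar> (- Ind D d) = k}. wr D d))"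

text \<open>F_K as an element of the free abelian group on classes: coefficient of t^C.\<close>
definition F_coef :: "gdiag \<Rightarrow> lpoly set \<Rightarrow> int" where
  "F_coef D C = (\<Sum>c\<in>{c\<in>chords D. lcls (gpoly D c) = C}. wr D c)
              - (if C = lcls lzero then writhe D else 0)"

definition F_classes :: "gdiag \<Rightarrow> lpoly set set" where
  "F_classes D = (\<lambda>c. lcls (gpoly D c)) ` chords D"

definition omega3_ok :: "endpt \<times> endpt \<Rightarrow> endpt \<times> endpt \<Rightarrow> endpt \<times> endpt \<Rightarrow> bool" where
  "omega3_ok P1 P2 P3 \<longleftrightarrow> (\<exists>T M B a b c sa sb sc e1 e2 e3.
     (T,M,B) \<in> {(P1,P2,P3),(P1,P3,P2),(P2,P1,P3),(P2,P3,P1),(P3,P1,P2),(P3,P2,P1)} \<and>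
     a \<noteq> b \<and> a \<noteq> c \<and> b \<noteq> c \<and>
     T = (if e1 then ((a,True,sa),(b,True,sb)) else ((b,True,sb),(a,True,sa))) \<and>
     M = (if e2 then ((a,False,sa),(c,True,sc)) else ((c,True,sc),(a,False,sa))) \<and>
     B = (if e3 then ((b,False,sb),(c,False,sc)) else ((c,False,sc),(b,False,sb))) \<and>
     ((e1 = e2) = (sb = sc)) \<and> ((e2 = e3) = (sa = sb)))"

inductive gd_move :: "gdiag \<Rightarrow> gdiag \<Rightarrow> bool" where
  rot: "gd_move D (rotate1 D)"
| ren: "inj_on f (chords D) \<Longrightarrow> gd_move D (map (\<lambda>(l,t,s). (f l, t, s)) D)"
| om1: "l \<notin> chords (u @ v) \<Longrightarrow>
        gd_move (u @ v) (u @ [(l,t,s),(l,\<not>t,s)] @ v)"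
| om2: "a \<notin> chords (u @ v @ x) \<Longrightarrow> b \<notin> chords (u @ v @ x) \<Longrightarrow> a \<noteq> b \<Longrightarrow> sb = (\<not> sa) \<Longrightarrow>
        {p1,p2} = {(a,t,sa),(b,t,sb)} \<Longrightarrow> {q1,q2} = {(a,\<not>t,sa),(b,\<not>t,sb)} \<Longrightarrow>
        gd_move (u @ v @ x) (u @ [p1,p2] @ v @ [q1,q2] @ x)"
| om3: "omega3_ok (x1,y1) (x2,y2) (x3,y3) \<Longrightarrow>
        gd_move (u @ [x1,y1] @ v @ [x2,y2] @ w @ [x3,y3] @ z)
                (u @ [y1,x1] @ v @ [y2,x2] @ w @ [y3,x3] @ z)"

definition gd_equiv :: "gdiag \<Rightarrow> gdiag \<Rightarrow> bool" where
  "gd_equiv = (\<lambda>D E. gd_wf D \<and> gd_wf E \<and> (gd_move D E \<or> gd_move E D))\<^sup>*\<^sup>*"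

definition virtual_knot :: "gdiag \<Rightarrow> gdiag set" where
  "virtual_knot D = {E. gd_wf E \<and> gd_equiv D E}"

definition real_crossing_number :: "gdiag set \<Rightarrow> nat" where
  "real_crossing_number K = (LEAST n. \<exists>D\<in>K. card (chords D) = n)"

end

theory Submission
  imports Defs
begin


lemma wf_dist: "gd_wf D \<Longrightarrow> distinct (map (\<lambda>(l,t,s). (l,t)) D)"
  by (simp add: gd_wf_def)

lemma pos_eq:
  assumes "gd_wf D" "i < length D" "fst (D!i) = l" "fst (snd (D!i)) = t"
  shows "pos D l t = i"
proof -
  have u: "j = i" if "j < length D" "fst (D!j) = l" "fst (snd (D!j)) = t" for j
  proof -
    have "map (\<lambda>(l,t,s). (l,t)) D ! j = map (\<lambda>(l,t,s). (l,t)) D ! i"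
      using that assms by (auto simp: case_prod_beta)
    let ?g = "\<lambda>(l::nat,t::bool,s::bool). (l,t)"
    have e: "?g (D!j) = ?g (D!i)"
      using that assms by (auto simp: case_prod_beta)
    have "map ?g D ! j = map ?g D ! i" using e that(1) assms(2) by simp
    moreover have "distinct (map ?g D)" using wf_dist[OF assms(1)] .
    ultimately show ?thesis using that(1) assms(2) nth_eq_iff_index_eq by fastforce
  qed
  show ?thesis unfolding pos_def
  proof (rule the_equality)
    show "i < length D \<and> fst (D!i) = l \<and> fst (snd (D!i)) = t" using assms by simp
  next
    fix j assume "j < length D \<and> fst (D!j) = l \<and> fst (snd (D!j)) = t"
    thus "j = i" using u by blast
  qed
qed

lemma finite_chords: "finite (chords D)"
proof -
  have "chords D \<subseteq> fst ` set D" by (force simp: chords_def)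
  thus ?thesis by (rule finite_subset) simp
qed

lemma key_in: 
  assumes "gd_wf D" "c \<in> chords D"
  shows "\<exists>s. (c,t,s) \<in> set D"
proof -
  obtain t0 s where "(c,t0,s) \<in> set D" using assms(2) by (auto simp: chords_def)
  then obtain s' where "(c,True,s') \<in> set D" "(c,False,s') \<in> set D"
    using assms(1) unfolding gd_wf_def by blast
  thus ?thesis by (cases t) auto
qed

lemma pos_props:
  assumes "gd_wf D" "c \<in> chords D"
  shows "pos D c t < length D \<and> fst (D ! pos D c t) = c \<and> fst (snd (D ! pos D c t)) = t"
proof -
  obtain s where "(c,t,s) \<in> set D" using key_in[OF assms] by blast
  then obtain i where i: "i < length D" "D!i = (c,t,s)" by (auto simp: in_set_conv_nth)
  hence "pos D c t = i" using pos_eq[OF assms(1)] by simp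
  thus ?thesis using i by simp
qed

lemma pos_less: "gd_wf D \<Longrightarrow> c \<in> chords D \<Longrightarrow> pos D c t < length D"
  using pos_props by blast

lemma pos_inj:
  assumes "gd_wf D" "c \<in> chords D" "d \<in> chords D" "pos D c t = pos D d t'"
  shows "c = d \<and> t = t'"
  using pos_props[OF assms(1,2), of t] pos_props[OF assms(1,3), of t'] assms(4) by metis

section \<open>Cyclic betweenness\<close>

definition cyc :: "nat \<Rightarrow> nat \<Rightarrow> nat \<Rightarrow> bool" where
  "cyc p k q \<longleftrightarrow> (p < k \<and> k < q) \<or> (q < p \<and> p < k) \<or> (k < q \<and> q < p)"

lemma on_right_cyc:
  assumes "gd_wf D" "c \<in> chords D" "k \<noteq> pos D c True" "k \<noteq> pos D c False"
  shows "on_right D c k = cyc (pos D c True) k (pos D c False)"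
proof -
  have "pos D c True \<noteq> pos D c False" using pos_inj[OF assms(1,2,2)] by blast
  thus ?thesis using assms(3,4) unfolding on_right_def between_def cyc_def by auto
qed

definition Xv :: "gdiag \<Rightarrow> nat \<Rightarrow> nat \<Rightarrow> int" where
  "Xv D c d = (if crosses_LR D c d then 1 else if crosses_RL D c d then -1 else 0)"

lemma Xv_cyc:
  assumes "gd_wf D" "c \<in> chords D" "d \<in> chords D" "c \<noteq> d"
  shows "Xv D c d = of_bool (cyc (pos D c True) (pos D d False) (pos D c False))
                  - of_bool (cyc (pos D c True) (pos D d True) (pos D c False))"
proof -
  have ne: "pos D d t \<noteq> pos D c t'" for t t' using pos_inj[OF assms(1,3,2)] assms(4) by blast
  show ?thesis unfolding Xv_def crosses_LR_def crosses_RL_def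
    using on_right_cyc[OF assms(1,2) ne ne] assms by auto
qed

lemma Xv_self: "Xv D c c = 0"
  by (simp add: Xv_def crosses_LR_def crosses_RL_def)

lemma Xv_nonchord: "d \<notin> chords D \<Longrightarrow> Xv D c d = 0"
  by (simp add: Xv_def crosses_LR_def crosses_RL_def)

lemma Xv_range: "Xv D c d \<in> {-1,0,1}"
  by (simp add: Xv_def)

lemma cyc_antisym:
  assumes "distinct [p,q,r,s]"
  shows "of_bool (cyc p s q) - of_bool (cyc p r q) = - (of_bool (cyc r q s) - of_bool (cyc r p s) :: int)"
proof -
  have "p < q \<or> q < p" "p < r \<or> r < p" "p < s \<or> s < p" "q < r \<or> r < q" "q < s \<or> s < q" "r < s \<or> s < r"
    using assms by auto
  thus ?thesis unfolding cyc_def by (elim disjE) (simp_all, linarith?)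
qed

lemma Xv_antisym:
  assumes "gd_wf D" "c \<in> chords D" "d \<in> chords D" "c \<noteq> d"
  shows "Xv D d c = - Xv D c d"
proof -
  have "distinct [pos D c True, pos D c False, pos D d True, pos D d False]"
    using pos_inj[OF assms(1)] assms by auto
  from cyc_antisym[OF this] show ?thesis using Xv_cyc[OF assms] Xv_cyc[OF assms(1,3,2)] assms(4) by simp
qed

section \<open>Abstract invariant\<close>

definition IndA :: "nat set \<Rightarrow> (nat \<Rightarrow> int) \<Rightarrow> (nat \<Rightarrow> nat \<Rightarrow> int) \<Rightarrow> nat \<Rightarrow> int" where
  "IndA A w X c = (\<Sum>d\<in>A. X c d * w d)"

definition gA :: "nat set \<Rightarrow> (nat \<Rightarrow> int) \<Rightarrow> (nat \<Rightarrow> nat \<Rightarrow> int) \<Rightarrow> nat \<Rightarrow> lpoly" where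
  "gA A w X c = (\<lambda>k. \<Sum>d\<in>A. if X c d \<noteq> 0 \<and> phi \<bar>IndA A w X c\<bar> (X c d * IndA A w X d) = k
                              then X c d * w d else 0)"

definition FA :: "nat set \<Rightarrow> (nat \<Rightarrow> int) \<Rightarrow> (nat \<Rightarrow> nat \<Rightarrow> int) \<Rightarrow> lpoly set \<Rightarrow> int" where
  "FA A w X C = (\<Sum>c\<in>{c\<in>A. lcls (gA A w X c) = C}. w c) - (if C = lcls lzero then (\<Sum>c\<in>A. w c) else 0)"

lemma LR_chord: "crosses_LR D c d \<Longrightarrow> d \<in> chords D"
  by (simp add: crosses_LR_def)
lemma RL_chord: "crosses_RL D c d \<Longrightarrow> d \<in> chords D"
  by (simp add: crosses_RL_def)
lemma LR_RL: "crosses_LR D c d \<Longrightarrow> \<not> crosses_RL D c d"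
  by (simp add: crosses_LR_def crosses_RL_def)

lemma sum_filter_chords:
  assumes "\<And>d. P d \<Longrightarrow> d \<in> chords D"
  shows "(\<Sum>d\<in>{d. P d}. f d) = (\<Sum>d\<in>chords D. if P d then f d else (0::int))"
proof -
  have "{d. P d} = {d \<in> chords D. P d}" using assms by blast
  thus ?thesis using sum.inter_filter[OF finite_chords] by simp
qed

lemma Ind_eq: "Ind D c = IndA (chords D) (wr D) (Xv D) c"
proof -
  have "Ind D c = (\<Sum>d\<in>chords D. if crosses_LR D c d then wr D d else 0)
                - (\<Sum>d\<in>chords D. if crosses_RL D c d then wr D d else 0)"
    unfolding Ind_def
    by (subst sum_filter_chords[of "crosses_LR D c"], erule LR_chord,
        subst sum_filter_chords[of "crosses_RL D c"], erule RL_chord, rule refl)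
  also have "\<dots> = (\<Sum>d\<in>chords D. Xv D c d * wr D d)"
    unfolding sum_subtractf[symmetric] Xv_def
    by (rule sum.cong) (auto dest: LR_RL)
  finally show ?thesis by (simp add: IndA_def)
qed

lemma gpoly_eq: "gpoly D c = gA (chords D) (wr D) (Xv D) c"
proof
  fix k
  let ?N = "\<bar>Ind D c\<bar>"
  have "gpoly D c k = (\<Sum>d\<in>chords D. if crosses_LR D c d \<and> phi ?N (Ind D d) = k then wr D d else 0)
                - (\<Sum>d\<in>chords D. if crosses_RL D c d \<and> phi ?N (- Ind D d) = k then wr D d else 0)"
    unfolding gpoly_def
    by (subst sum_filter_chords, blast dest: LR_chord,
        subst sum_filter_chords, blast dest: RL_chord, rule refl)
  also have "\<dots> = gA (chords D) (wr D) (Xv D) c k"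
    unfolding gA_def sum_subtractf[symmetric] Ind_eq[symmetric]
    by (rule sum.cong) (auto simp: Xv_def dest: LR_RL)
  finally show "gpoly D c k = gA (chords D) (wr D) (Xv D) c k" .
qed

lemma F_eq: "F_coef D C = FA (chords D) (wr D) (Xv D) C"
  unfolding F_coef_def FA_def gpoly_eq writhe_def by simp

lemma FA_reindex:
  assumes inj: "inj_on f A" and fin: "finite A"
    and w: "\<And>c. c\<in>A \<Longrightarrow> w' (f c) = w c"
    and X: "\<And>c d. c\<in>A \<Longrightarrow> d\<in>A \<Longrightarrow> X' (f c) (f d) = X c d"
  shows "FA (f`A) w' X' C = FA A w X C"
proof -
  have I: "IndA (f`A) w' X' (f c) = IndA A w X c" if "c\<in>A" for c
    unfolding IndA_def sum.reindex[OF inj] using that w X by (auto intro!: sum.cong)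
  have G: "gA (f`A) w' X' (f c) = gA A w X c" if "c\<in>A" for c
    unfolding gA_def sum.reindex[OF inj] using that w X I by (auto intro!: sum.cong)
  have S: "{c\<in>f`A. lcls (gA (f`A) w' X' c) = C} = f ` {c\<in>A. lcls (gA A w X c) = C}"
    using G by auto
  have inj2: "inj_on f {c\<in>A. lcls (gA A w X c) = C}" using inj by (rule inj_on_subset) auto
  show ?thesis unfolding FA_def S sum.reindex[OF inj2] sum.reindex[OF inj]
    using w by (auto intro!: sum.cong)
qed

lemma FA_om1:
  assumes fin: "finite A" and l: "l \<notin> A"
    and w: "\<And>c. c\<in>A \<Longrightarrow> w' c = w c"
    and X: "\<And>c d. c\<in>A \<Longrightarrow> d\<in>A \<Longrightarrow> X' c d = X c d"
    and Xl1: "\<And>d. X' l d = 0" and Xl2: "\<And>d. d\<in>A \<Longrightarrow> X' d l = 0"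
  shows "FA (insert l A) w' X' C = FA A w X C"
proof -
  have I: "IndA (insert l A) w' X' c = IndA A w X c" if "c\<in>A" for c
    unfolding IndA_def using fin l that w X Xl2 by (auto intro!: sum.cong)
  have Il: "IndA (insert l A) w' X' l = 0"
    unfolding IndA_def using Xl1 by simp
  have G: "gA (insert l A) w' X' c = gA A w X c" if "c\<in>A" for c
    unfolding gA_def using fin l that w X Xl2 I by (auto intro!: sum.cong)
  have Gl: "gA (insert l A) w' X' l = lzero"
    unfolding gA_def lzero_def using Xl1 by simp
  have S: "{c\<in>insert l A. lcls (gA (insert l A) w' X' c) = C} =
      (if lcls lzero = C then insert l {c\<in>A. lcls (gA A w X c) = C} else {c\<in>A. lcls (gA A w X c) = C})"
    using G Gl by auto
  have e1: "(\<Sum>c\<in>{c\<in>A. lcls (gA A w X c) = C}. w' c) = (\<Sum>c\<in>{c\<in>A. lcls (gA A w X c) = C}. w c)"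
    using w by (auto intro!: sum.cong)
  have e2: "(\<Sum>c\<in>A. w' c) = (\<Sum>c\<in>A. w c)" using w by (auto intro!: sum.cong)
  show ?thesis unfolding FA_def S using fin l e1 e2 by auto
qed

lemma phi_self: "phi \<bar>I\<bar> (x * I) = phi \<bar>I\<bar> 0"
  by (cases "I = 0") (auto simp: phi_def)

lemma FA_om2:
  assumes fin: "finite A" and a: "a \<notin> A" and b: "b \<notin> A" and ab: "a \<noteq> b"
    and wab: "w' b = - w' a"
    and w: "\<And>c. c\<in>A \<Longrightarrow> w' c = w c"
    and X: "\<And>c d. c\<in>A \<Longrightarrow> d\<in>A \<Longrightarrow> X' c d = X c d"
    and Xab: "\<And>d. d\<in>A \<Longrightarrow> X' a d = X' b d"
    and Xda: "\<And>d. d\<in>A \<Longrightarrow> X' d a = - X' a d"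
    and Xdb: "\<And>d. d\<in>A \<Longrightarrow> X' d b = - X' b d"
    and Xba: "X' b a = - X' a b" and Xaa: "X' a a = 0" and Xbb: "X' b b = 0"
  shows "FA (insert a (insert b A)) w' X' C = FA A w X C"
proof -
  let ?A = "insert a (insert b A)"
  have sumA: "(\<Sum>d\<in>?A. f d) = f a + f b + (\<Sum>d\<in>A. f d)" for f :: "nat \<Rightarrow> int"
    using fin a b ab by simp
  have I: "IndA ?A w' X' c = IndA A w X c" if "c\<in>A" for c
    unfolding IndA_def sumA using that w X Xab Xda Xdb wab by (auto intro!: sum.cong)
  have Iab: "IndA ?A w' X' a = IndA ?A w' X' b"
    unfolding IndA_def sumA using Xab Xba Xaa Xbb wab by (auto intro!: sum.cong)
  have G: "gA ?A w' X' c = gA A w X c" if "c\<in>A" for c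
  proof
    fix k
    have "X' c b = X' c a" using Xda Xdb Xab that by simp
    thus "gA ?A w' X' c k = gA A w X c k"
      unfolding gA_def sumA using that w X I Iab wab by (auto intro!: sum.cong)
  qed
  have Gab: "gA ?A w' X' a = gA ?A w' X' b"
  proof
    fix k
    have p: "phi \<bar>IndA ?A w' X' b\<bar> (X' a b * IndA ?A w' X' b) =
             phi \<bar>IndA ?A w' X' b\<bar> (- X' a b * IndA ?A w' X' b)"
      using phi_self[of "IndA ?A w' X' b" "X' a b"] phi_self[of "IndA ?A w' X' b" "- X' a b"] by simp
    show "gA ?A w' X' a k = gA ?A w' X' b k"
      unfolding gA_def sumA using Xab Xba Xaa Xbb wab Iab p by (auto intro!: sum.cong)
  qed
  define S where "S = {c\<in>A. lcls (gA A w X c) = C}"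
  have fS: "finite S" using fin by (simp add: S_def)
  have aS: "a \<notin> S" "b \<notin> S" using a b by (auto simp: S_def)
  have Seq: "{c\<in>?A. lcls (gA ?A w' X' c) = C} =
      (if lcls (gA ?A w' X' a) = C then insert a (insert b S) else S)"
    using G Gab by (auto simp: S_def)
  have e1: "(\<Sum>c\<in>S. w' c) = (\<Sum>c\<in>S. w c)"
    using w by (auto simp: S_def intro!: sum.cong)
  have e2: "(\<Sum>c\<in>A. w' c) = (\<Sum>c\<in>A. w c)" using w by (auto intro!: sum.cong)
  show ?thesis unfolding FA_def Seq S_def[symmetric] sumA using fS aS ab e1 e2 wab by auto
qed

lemma two_terms:
  fixes x1 x2 y1 y2 v1 v2 :: int
  assumes "x1 \<in> {-1,0,1}" "x2 \<in> {-1,0,1}" "y1 \<in> {-1,0,1}" "y2 \<in> {-1,0,1}"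
    and "(if x1 = 1 then v1 else 0) + (if x2 = 1 then v2 else 0) = (if y1 = 1 then v1 else 0) + (if y2 = 1 then v2 else 0)"
    and "(if x1 = -1 then v1 else 0) + (if x2 = -1 then v2 else 0) = (if y1 = -1 then v1 else 0) + (if y2 = -1 then v2 else 0)"
  shows "(if x1 \<noteq> 0 \<and> f x1 = k then x1 * v1 else 0) + (if x2 \<noteq> 0 \<and> f x2 = k then x2 * v2 else 0)
       = (if y1 \<noteq> 0 \<and> f y1 = k then y1 * v1 else 0) + (if y2 \<noteq> 0 \<and> f y2 = k then y2 * v2 else 0)"
  using assms by (auto split: if_splits)

lemma if_zero: "x = 0 \<Longrightarrow> (if x \<noteq> 0 \<and> P then y else (0::int)) = 0"
  by simp

lemma phi_shift: "phi \<bar>I\<bar> (y + m * I) = phi \<bar>I\<bar> y"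
proof (cases "I = 0")
  case False
  have e: "m * I = \<bar>I\<bar> * (sgn I * m)" by (simp add: abs_mult_sgn mult.assoc[symmetric])
  have "(y + m * I) mod \<bar>I\<bar> = y mod \<bar>I\<bar>" unfolding e by simp
  thus ?thesis using False by (simp add: phi_def)
qed simp

lemma FA_cong_g:
  assumes "\<And>c. c\<in>A \<Longrightarrow> gA A w X' c = gA A w X c"
  shows "FA A w X' C = FA A w X C"
proof -
  have "{c\<in>A. lcls (gA A w X' c) = C} = {c\<in>A. lcls (gA A w X c) = C}" using assms by auto
  thus ?thesis unfolding FA_def by simp
qed

lemma FA_om3:
  assumes fin: "finite A" and T: "a \<in> A" "b \<in> A" "c \<in> A" "a \<noteq> b" "a \<noteq> c" "b \<noteq> c"
    and Xo: "\<And>d e. d\<in>A \<Longrightarrow> e\<in>A \<Longrightarrow> \<not> (d \<in> {a,b,c} \<and> e \<in> {a,b,c}) \<Longrightarrow> X' d e = X d e"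
    and rel: "\<And>d. d \<in> A - {a,b,c} \<Longrightarrow> X d b = X d a + X d c"
    and anti: "\<And>d x. d \<in> A - {a,b,c} \<Longrightarrow> x \<in> {a,b,c} \<Longrightarrow> X x d = - X d x"
    and diag: "X a a = 0" "X b b = 0" "X c c = 0" "X' a a = 0" "X' b b = 0" "X' c c = 0"
    and an: "X b a = - X a b" "X c a = - X a c" "X c b = - X b c"
            "X' b a = - X' a b" "X' c a = - X' a c" "X' c b = - X' b c"
    and rng: "X a b \<in> {-1,0,1}" "X a c \<in> {-1,0,1}" "X b c \<in> {-1,0,1}"
             "X' a b \<in> {-1,0,1}" "X' a c \<in> {-1,0,1}" "X' b c \<in> {-1,0,1}"
    and L1: "X a b * w b + X a c * w c = X' a b * w b + X' a c * w c"
    and L2: "- X a b * w a + X b c * w c = - X' a b * w a + X' b c * w c"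
    and L3: "- X a c * w a - X b c * w b = - X' a c * w a - X' b c * w b"
    and K: "- X a b * w a + X b c * w c = (X a b * w b + X a c * w c) + (- X a c * w a - X b c * w b)"
    and Ga: "\<And>s. s \<in> {1,-1} \<Longrightarrow> (if X a b = s then w b else 0) + (if X a c = s then w c else 0)
                 = (if X' a b = s then w b else 0) + (if X' a c = s then w c else 0)"
    and Gb: "\<And>s. s \<in> {1,-1} \<Longrightarrow> (if X a b = s then - w a else 0) + (if X b c = s then w c else 0)
                 = (if X' a b = s then - w a else 0) + (if X' b c = s then w c else 0)"
    and Gc: "\<And>s. s \<in> {1,-1} \<Longrightarrow> (if - X a c = s then w a else 0) + (if - X b c = s then w b else 0)
                 = (if - X' a c = s then w a else 0) + (if - X' b c = s then w b else 0)"
  shows "FA A w X' C = FA A w X C"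
proof -
  let ?R = "A - {a,b,c}"
  have finR: "finite ?R" using fin by simp
  have sumA: "(\<Sum>d\<in>A. f d) = f a + f b + f c + (\<Sum>d\<in>?R. f d)" for f :: "nat \<Rightarrow> int"
  proof -
    have "A = insert a (insert b (insert c ?R))" using T by auto
    hence "(\<Sum>d\<in>A. f d) = (\<Sum>d\<in>insert a (insert b (insert c ?R)). f d)" by simp
    also have "\<dots> = f a + f b + f c + (\<Sum>d\<in>?R. f d)" using finR T by simp
    finally show ?thesis .
  qed
  define Ia where "Ia = (\<Sum>d\<in>?R. X a d * w d)"
  define Ib where "Ib = (\<Sum>d\<in>?R. X b d * w d)"
  define Ic where "Ic = (\<Sum>d\<in>?R. X c d * w d)"
  have Ib: "Ib = Ia + Ic"
  proof -
    have "Ib = (\<Sum>d\<in>?R. X a d * w d + X c d * w d)"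
      unfolding Ib_def by (rule sum.cong) (auto simp: anti rel algebra_simps)
    thus ?thesis by (simp add: Ia_def Ic_def sum.distrib)
  qed
  have R': "(\<Sum>d\<in>?R. X' x d * w d) = (\<Sum>d\<in>?R. X x d * w d)" if "x \<in> {a,b,c}" for x
    using that T by (intro sum.cong) (auto intro!: Xo)
  have IA: "IndA A w X a = X a b * w b + X a c * w c + Ia"
           "IndA A w X b = - X a b * w a + X b c * w c + Ib"
           "IndA A w X c = - X a c * w a - X b c * w b + Ic"
    unfolding IndA_def sumA Ia_def Ib_def Ic_def using diag an by simp_all
  have IA': "IndA A w X' a = X' a b * w b + X' a c * w c + Ia"
           "IndA A w X' b = - X' a b * w a + X' b c * w c + Ib"
           "IndA A w X' c = - X' a c * w a - X' b c * w b + Ic"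
    unfolding IndA_def sumA Ia_def Ib_def Ic_def using diag an R' by simp_all
  have Ieq: "IndA A w X' x = IndA A w X x" if "x \<in> {a,b,c}" for x
    using that IA IA' L1 L2 L3 by auto
  have Ieqs: "IndA A w X' a = IndA A w X a" "IndA A w X' b = IndA A w X b" "IndA A w X' c = IndA A w X c"
    using Ieq by auto
  have Ieq2: "IndA A w X' d = IndA A w X d" if "d \<in> ?R" for d
    unfolding IndA_def using that by (intro sum.cong) (auto intro!: Xo)
  have Ieq_all: "IndA A w X' d = IndA A w X d" if "d \<in> A" for d
    using that Ieq Ieq2 by blast
  have Ibac: "IndA A w X b = IndA A w X a + IndA A w X c"
    using IA Ib K by simp
  have G: "gA A w X' x = gA A w X x" if "x \<in> A" for x
  proof (cases "x \<in> ?R")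
    case True
    have xe: "X' x d = X x d" if "d \<in> A" for d using Xo True that by auto
    show ?thesis unfolding gA_def using True Ieq_all xe
      by (intro ext sum.cong) auto
  next
    case False
    hence x: "x \<in> {a,b,c}" using that by blast
    let ?I = "IndA A w X"
    have restg: "(\<Sum>d\<in>?R. if X' x d \<noteq> 0 \<and> phi \<bar>IndA A w X' x\<bar> (X' x d * IndA A w X' d) = k then X' x d * w d else 0)
        = (\<Sum>d\<in>?R. if X x d \<noteq> 0 \<and> phi \<bar>?I x\<bar> (X x d * ?I d) = k then X x d * w d else 0)" for k
    proof -
      have xe: "X' x d = X x d" if "d \<in> ?R" for d using Xo[of x d] x T that by auto
      show ?thesis using x Ieq_all Ieq xe by (intro sum.cong) auto
    qed
    show ?thesis
    proof
      fix k
      have gsplit: "gA A w Y z k = (if Y z a \<noteq> 0 \<and> phi \<bar>IndA A w Y z\<bar> (Y z a * IndA A w Y a) = k then Y z a * w a else 0)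
          + (if Y z b \<noteq> 0 \<and> phi \<bar>IndA A w Y z\<bar> (Y z b * IndA A w Y b) = k then Y z b * w b else 0)
          + (if Y z c \<noteq> 0 \<and> phi \<bar>IndA A w Y z\<bar> (Y z c * IndA A w Y c) = k then Y z c * w c else 0)
          + (\<Sum>d\<in>?R. if Y z d \<noteq> 0 \<and> phi \<bar>IndA A w Y z\<bar> (Y z d * IndA A w Y d) = k then Y z d * w d else 0)"
        for Y z unfolding gA_def sumA by simp
      have p1: "phi \<bar>?I a\<bar> (s * ?I b) = phi \<bar>?I a\<bar> (s * ?I c)" for s
        using phi_shift[where y="s * ?I c" and m=s and I="?I a"] Ibac by (simp add: algebra_simps)
      have p2: "phi \<bar>?I b\<bar> (s * ?I a) = phi \<bar>?I b\<bar> (- s * ?I c)" for s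
        using phi_shift[where y="- s * ?I c" and m=s and I="?I b"] Ibac by (simp add: algebra_simps)
      have p3: "phi \<bar>?I c\<bar> (s * ?I b) = phi \<bar>?I c\<bar> (s * ?I a)" for s
        using phi_shift[where y="s * ?I a" and m=s and I="?I c"] Ibac by (simp add: algebra_simps)
      have p2m: "phi \<bar>?I b\<bar> (- (s * ?I a)) = phi \<bar>?I b\<bar> (s * ?I c)" for s
        using p2[of "- s"] by simp
      have p3m: "phi \<bar>?I c\<bar> (- (s * ?I b)) = phi \<bar>?I c\<bar> (- (s * ?I a))" for s
        using p3[of "- s"] by simp
      consider "x = a" | "x = b" | "x = c" using x by blast
      thus "gA A w X' x k = gA A w X x k"
      proof cases
        case 1
        have tt: "(if X a b \<noteq> 0 \<and> phi \<bar>?I a\<bar> (X a b * ?I c) = k then X a b * w b else 0)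
                + (if X a c \<noteq> 0 \<and> phi \<bar>?I a\<bar> (X a c * ?I c) = k then X a c * w c else 0)
                = (if X' a b \<noteq> 0 \<and> phi \<bar>?I a\<bar> (X' a b * ?I c) = k then X' a b * w b else 0)
                + (if X' a c \<noteq> 0 \<and> phi \<bar>?I a\<bar> (X' a c * ?I c) = k then X' a c * w c else 0)"
          by (rule two_terms[where f = "\<lambda>s. phi \<bar>?I a\<bar> (s * ?I c)"]) (use rng Ga in auto)
        have "gA A w X' x k = gA A w X x k"
          unfolding 1 gsplit[of X] gsplit[of X'] restg[unfolded 1]
          using tt diag p1 Ieq by (simp split del: if_split)
        thus ?thesis .
      next
        case 2
        have tt: "(if X a b \<noteq> 0 \<and> phi \<bar>?I b\<bar> (X a b * ?I c) = k then X a b * - w a else 0)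
                + (if X b c \<noteq> 0 \<and> phi \<bar>?I b\<bar> (X b c * ?I c) = k then X b c * w c else 0)
                = (if X' a b \<noteq> 0 \<and> phi \<bar>?I b\<bar> (X' a b * ?I c) = k then X' a b * - w a else 0)
                + (if X' b c \<noteq> 0 \<and> phi \<bar>?I b\<bar> (X' b c * ?I c) = k then X' b c * w c else 0)"
          by (rule two_terms[where f = "\<lambda>s. phi \<bar>?I b\<bar> (s * ?I c)"]) (use rng Gb in auto)
        have "gA A w X' x k = gA A w X x k"
        proof -
          have ta: "(if Y b a \<noteq> 0 \<and> phi \<bar>?I b\<bar> (Y b a * ?I a) = k then Y b a * w a else 0)
             = (if Y a b \<noteq> 0 \<and> phi \<bar>?I b\<bar> (Y a b * ?I c) = k then Y a b * - w a else 0)"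
            if "Y b a = - Y a b" for Y
            using p2m[of "Y a b"] that by auto
          show ?thesis
            unfolding 2 gsplit[of X] gsplit[of X'] restg[unfolded 2 Ieqs] Ieqs ta[OF an(1)] ta[OF an(4)]
              if_zero[OF diag(2)] if_zero[OF diag(5)]
            using tt by linarith
        qed
        thus ?thesis .
      next
        case 3
        have tt: "(if - X a c \<noteq> 0 \<and> phi \<bar>?I c\<bar> (- X a c * ?I a) = k then - X a c * w a else 0)
                + (if - X b c \<noteq> 0 \<and> phi \<bar>?I c\<bar> (- X b c * ?I a) = k then - X b c * w b else 0)
                = (if - X' a c \<noteq> 0 \<and> phi \<bar>?I c\<bar> (- X' a c * ?I a) = k then - X' a c * w a else 0)
                + (if - X' b c \<noteq> 0 \<and> phi \<bar>?I c\<bar> (- X' b c * ?I a) = k then - X' b c * w b else 0)"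
        proof (rule two_terms[where f = "\<lambda>s. phi \<bar>?I c\<bar> (s * ?I a)"])
          show "- X a c \<in> {-1,0,1}" "- X b c \<in> {-1,0,1}" "- X' a c \<in> {-1,0,1}" "- X' b c \<in> {-1,0,1}"
            using rng by auto
        qed (rule Gc; simp)+
        have "gA A w X' x k = gA A w X x k"
        proof -
          have ta: "(if Y c a \<noteq> 0 \<and> phi \<bar>?I c\<bar> (Y c a * ?I a) = k then Y c a * w a else 0)
             = (if - Y a c \<noteq> 0 \<and> phi \<bar>?I c\<bar> (- Y a c * ?I a) = k then - Y a c * w a else 0)"
            if "Y c a = - Y a c" for Y
            using that by auto
          have tb: "(if Y c b \<noteq> 0 \<and> phi \<bar>?I c\<bar> (Y c b * ?I b) = k then Y c b * w b else 0)
             = (if - Y b c \<noteq> 0 \<and> phi \<bar>?I c\<bar> (- Y b c * ?I a) = k then - Y b c * w b else 0)"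
            if "Y c b = - Y b c" for Y
            using that p3m[of "Y b c"] by auto
          show ?thesis
            unfolding 3 gsplit[of X] gsplit[of X'] restg[unfolded 3 Ieqs] Ieqs ta[OF an(2)] ta[OF an(5)]
              tb[OF an(3)] tb[OF an(6)] if_zero[OF diag(3)] if_zero[OF diag(6)]
            using tt by linarith
        qed
        thus ?thesis .
      qed
    qed
  qed
  show ?thesis by (rule FA_cong_g) (rule G)
qed



lemma Xv_transfer:
  assumes D: "gd_wf D" and E: "gd_wf E"
    and cd: "c \<in> chords D" "d \<in> chords D" and cd': "c' \<in> chords E" "d' \<in> chords E"
    and ne: "c \<noteq> d" "c' \<noteq> d'"
    and pc: "\<And>t. pos E c' t = \<sigma> (pos D c t)" and pd: "\<And>t. pos E d' t = \<sigma> (pos D d t)"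
    and cyc: "\<And>p k q. p < length D \<Longrightarrow> k < length D \<Longrightarrow> q < length D \<Longrightarrow> cyc (\<sigma> p) (\<sigma> k) (\<sigma> q) = cyc p k q"
  shows "Xv E c' d' = Xv D c d"
  using Xv_cyc[OF E cd' ne(2)] Xv_cyc[OF D cd ne(1)] pc pd cyc pos_less[OF D] cd by simp

lemma cyc_rot:
  assumes "p < n" "k < n" "q < n"
  shows "cyc (if p = 0 then n - 1 else p - 1) (if k = 0 then n - 1 else k - 1) (if q = 0 then n - 1 else q - 1) = cyc p k q"
  using assms unfolding cyc_def by auto

lemma F_rot:
  assumes D: "gd_wf D" and E: "gd_wf (rotate1 D)"
  shows "F_coef (rotate1 D) C = F_coef D C"
proof -
  let ?E = "rotate1 D" and ?n = "length D"
  let ?\<sigma> = "\<lambda>p. if p = 0 then ?n - 1 else p - 1"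
  have ch: "chords ?E = chords D" by (simp add: chords_def)
  have w: "wr ?E = wr D" by (simp add: wr_def fun_eq_iff)
  have pe: "pos ?E c t = ?\<sigma> (pos D c t)" if c: "c \<in> chords D" for c t
  proof -
    have p: "pos D c t < ?n" "fst (D ! pos D c t) = c" "fst (snd (D ! pos D c t)) = t"
      using pos_props[OF D c] by auto
    have s: "?\<sigma> (pos D c t) < ?n" using p(1) by auto
    have "Suc (?\<sigma> (pos D c t)) mod ?n = pos D c t" using p(1) by auto
    hence "?E ! ?\<sigma> (pos D c t) = D ! pos D c t" using nth_rotate1[of "?\<sigma> (pos D c t)" D] s by simp
    thus ?thesis using pos_eq[OF E, of "?\<sigma> (pos D c t)"] s p by simp
  qed
  have X: "Xv ?E c d = Xv D c d" if "c \<in> chords D" "d \<in> chords D" for c d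
  proof (cases "c = d")
    case True thus ?thesis by (simp add: Xv_self)
  next
    case False
    show ?thesis
      by (rule Xv_transfer[OF D E that that[folded ch] False False, where \<sigma> = ?\<sigma>])
         (use pe that cyc_rot in auto)
  qed
  show ?thesis unfolding F_eq ch w
    using FA_reindex[of id "chords D" "wr D" "wr D" "Xv ?E" "Xv D" C] X finite_chords by simp
qed

lemma F_ren:
  assumes D: "gd_wf D" and E: "gd_wf (map (\<lambda>(l,t,s). (f l, t, s)) D)" and inj: "inj_on f (chords D)"
  shows "F_coef (map (\<lambda>(l,t,s). (f l, t, s)) D) C = F_coef D C"
proof -
  let ?g = "\<lambda>(l::nat,t::bool,s::bool). (f l, t, s)"
  let ?E = "map ?g D"
  have ch: "chords ?E = f ` chords D" by (force simp: chords_def)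
  have w: "wr ?E (f c) = wr D c" if "c \<in> chords D" for c
  proof -
    have "(f c, True, True) \<in> set ?E \<longleftrightarrow> (c, True, True) \<in> set D"
    proof
      assume "(f c, True, True) \<in> set ?E"
      then obtain l where l: "(l, True, True) \<in> set D" "f l = f c" by auto
      hence "l \<in> chords D" by (auto simp: chords_def)
      thus "(c, True, True) \<in> set D" using l inj that by (metis inj_on_def)
    qed force
    thus ?thesis by (simp add: wr_def)
  qed
  have pe: "pos ?E (f c) t = pos D c t" if c: "c \<in> chords D" for c t
  proof -
    have p: "pos D c t < length D" "fst (D ! pos D c t) = c" "fst (snd (D ! pos D c t)) = t"
      using pos_props[OF D c] by auto
    thus ?thesis using pos_eq[OF E, of "pos D c t"] by (simp add: case_prod_beta)
  qed
  have X: "Xv ?E (f c) (f d) = Xv D c d" if "c \<in> chords D" "d \<in> chords D" for c d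
  proof (cases "c = d")
    case True thus ?thesis by (simp add: Xv_self)
  next
    case False
    hence "f c \<noteq> f d" using inj that by (meson inj_on_def)
    thus ?thesis
      by (intro Xv_transfer[OF D E that, where \<sigma> = id]) (use pe that ch False in auto)
  qed
  show ?thesis unfolding F_eq ch
    by (rule FA_reindex[OF inj finite_chords]) (use w X in auto)
qed



lemma pos_map:
  assumes D: "gd_wf D" and E: "gd_wf E" and c: "c \<in> chords D"
    and m: "\<And>i. i < length D \<Longrightarrow> \<sigma> i < length E \<and> E ! \<sigma> i = D ! i"
  shows "pos E c t = \<sigma> (pos D c t)"
proof -
  have p: "pos D c t < length D" "fst (D ! pos D c t) = c" "fst (snd (D ! pos D c t)) = t"
    using pos_props[OF D c] by auto
  thus ?thesis using pos_eq[OF E, of "\<sigma> (pos D c t)"] m[OF p(1)] by simp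
qed

lemma cyc_mono:
  assumes "strict_mono \<sigma>"
  shows "cyc (\<sigma> p) (\<sigma> k) (\<sigma> q) = cyc p k q"
  using assms unfolding cyc_def by (simp add: strict_mono_less)

lemma Xv_transfer2:
  assumes D: "gd_wf D" and E: "gd_wf E"
    and cd: "c \<in> chords D" "d \<in> chords D" and cd': "c \<in> chords E" "d \<in> chords E"
    and pc: "\<And>x t. x \<in> chords D \<Longrightarrow> pos E x t = \<sigma> (pos D x t)"
    and mono: "strict_mono \<sigma>"
  shows "Xv E c d = Xv D c d"
proof (cases "c = d")
  case True thus ?thesis by (simp add: Xv_self)
next
  case False
  show ?thesis
    using Xv_cyc[OF E cd' False] Xv_cyc[OF D cd False] pc[OF cd(1)] pc[OF cd(2)] cyc_mono[OF mono] by simp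
qed

lemma cyc_adj:
  assumes "x \<noteq> m" "x \<noteq> Suc m"
  shows "\<not> cyc m x (Suc m)" "cyc (Suc m) x m"
  using assms unfolding cyc_def by auto

lemma cyc_blockL:
  assumes "x = Suc M" "r \<noteq> M" "r \<noteq> Suc M" "y \<noteq> M" "y \<noteq> Suc M"
  shows "cyc x r y = cyc M r y"
  using assms unfolding cyc_def by auto

lemma cyc_blockR:
  assumes "y = Suc N" "r \<noteq> N" "r \<noteq> Suc N" "x \<noteq> N" "x \<noteq> Suc N"
  shows "cyc x r y = cyc x r N"
  using assms unfolding cyc_def by auto

lemma cyc_blocks:
  assumes "x \<in> {M, Suc M}" "x' \<in> {M, Suc M}" "y \<in> {N, Suc N}" "y' \<in> {N, Suc N}"
    and "Suc M < N \<or> Suc N < M" "r \<notin> {M, Suc M, N, Suc N}"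
  shows "cyc x r y = cyc x' r y'"
proof -
  have "cyc x r y = cyc M r N" if "x \<in> {M, Suc M}" "y \<in> {N, Suc N}" for x y
  proof -
    have "cyc x r y = cyc M r y"
      using that assms(5,6) cyc_blockL[of x M r y] by (cases "x = M") auto
    also have "\<dots> = cyc M r N"
      using that assms(5,6) cyc_blockR[of y N r M] by (cases "y = N") auto
    finally show ?thesis .
  qed
  thus ?thesis using assms by metis
qed

section \<open>Omega 1\<close>

lemma F_om1:
  assumes D: "gd_wf (u @ v)" and E: "gd_wf (u @ [(l,t,s),(l,\<not>t,s)] @ v)"
    and l: "l \<notin> chords (u @ v)"
  shows "F_coef (u @ [(l,t,s),(l,\<not>t,s)] @ v) C = F_coef (u @ v) C"
proof -
  let ?D = "u @ v" and ?E = "u @ [(l,t,s),(l,\<not>t,s)] @ v" and ?m = "length u"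
  let ?\<sigma> = "\<lambda>i. if i < ?m then i else i + 2"
  have mono: "strict_mono ?\<sigma>" by (auto simp: strict_mono_def)
  have ch: "chords ?E = insert l (chords ?D)" by (auto simp: chords_def)
  have w: "wr ?E c = wr ?D c" if "c \<in> chords ?D" for c
    using that l by (auto simp: wr_def)
  have m: "?\<sigma> i < length ?E \<and> ?E ! ?\<sigma> i = ?D ! i" if "i < length ?D" for i
    using that by (auto simp: nth_append)
  have pe: "pos ?E x t' = ?\<sigma> (pos ?D x t')" if "x \<in> chords ?D" for x t'
    by (rule pos_map[OF D E that m])
  have lE: "l \<in> chords ?E" using ch by simp
  have pl: "pos ?E l t = ?m" "pos ?E l (\<not>t) = Suc ?m"
    by (rule pos_eq[OF E]; simp add: nth_append)+
  have plT: "pos ?E l True \<in> {?m, Suc ?m}" "pos ?E l False \<in> {?m, Suc ?m}"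
            "pos ?E l True \<noteq> pos ?E l False"
    using pl by (cases t; simp)+
  have X: "Xv ?E c d = Xv ?D c d" if "c \<in> chords ?D" "d \<in> chords ?D" for c d
    by (rule Xv_transfer2[OF D E that _ _ pe mono]) (use that ch in auto)
  have Xl1: "Xv ?E l d = 0" for d
  proof (cases "d \<in> chords ?D")
    case True
    hence dl: "d \<noteq> l" using l by auto
    have dE: "d \<in> chords ?E" using True ch by simp
    have nd: "pos ?E d t' \<notin> {?m, Suc ?m}" for t'
      using pos_inj[OF E dE lE, of t' t] pos_inj[OF E dE lE, of t' "\<not>t"] pl dl by auto
    show ?thesis unfolding Xv_cyc[OF E lE dE dl[symmetric]]
      using plT nd[of True] nd[of False] cyc_adj by (cases t) auto
  next
    case False
    thus ?thesis using ch by (cases "d = l") (auto simp: Xv_self Xv_nonchord)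
  qed
  have Xl2: "Xv ?E d l = 0" if "d \<in> chords ?D" for d
    using Xv_antisym[OF E lE _, of d] Xl1[of d] that ch l by auto
  show ?thesis unfolding F_eq ch
    by (rule FA_om1[OF finite_chords l]) (use w X Xl1 Xl2 in auto)
qed

section \<open>Omega 2\<close>

lemma F_om2:
  assumes D: "gd_wf (u @ v @ x)" and E: "gd_wf (u @ [p1,p2] @ v @ [q1,q2] @ x)"
    and a: "a \<notin> chords (u @ v @ x)" and b: "b \<notin> chords (u @ v @ x)" and ab: "a \<noteq> b"
    and sb: "sb = (\<not> sa)"
    and P: "{p1,p2} = {(a,t,sa),(b,t,sb)}" and Q: "{q1,q2} = {(a,\<not>t,sa),(b,\<not>t,sb)}"
  shows "F_coef (u @ [p1,p2] @ v @ [q1,q2] @ x) C = F_coef (u @ v @ x) C"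
proof -
  let ?D = "u @ v @ x" and ?E = "u @ [p1,p2] @ v @ [q1,q2] @ x"
  let ?m1 = "length u" and ?m2 = "length u + 2 + length v"
  let ?\<sigma> = "\<lambda>i. if i < length u then i else if i < length u + length v then i + 2 else i + 4"
  have mono: "strict_mono ?\<sigma>" by (auto simp: strict_mono_def)
  have "set ?E = set ?D \<union> {p1,p2} \<union> {q1,q2}" by auto
  hence setE: "set ?E = set ?D \<union> {(a,t,sa),(b,t,sb)} \<union> {(a,\<not>t,sa),(b,\<not>t,sb)}"
    unfolding P Q .
  have ch: "chords ?E = insert a (insert b (chords ?D))"
    unfolding chords_def setE by auto
  have aD: "(a, t', s') \<notin> set ?D" "(b, t', s') \<notin> set ?D" for t' s'
    using a b by (auto simp: chords_def)
  have w: "wr ?E c = wr ?D c" if "c \<in> chords ?D" for c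
    using that a b unfolding wr_def setE by auto
  have wa: "wr ?E a = (if sa then 1 else -1)" and wb: "wr ?E b = (if sb then 1 else -1)"
    unfolding wr_def setE using aD ab by (cases t; auto)+
  have wab: "wr ?E b = - wr ?E a" using wa wb sb by simp
  have m: "?\<sigma> i < length ?E \<and> ?E ! ?\<sigma> i = ?D ! i" if "i < length ?D" for i
    using that by (auto simp: nth_append)
  have pe: "pos ?E y t' = ?\<sigma> (pos ?D y t')" if "y \<in> chords ?D" for y t'
    by (rule pos_map[OF D E that m])
  have aE: "a \<in> chords ?E" and bE: "b \<in> chords ?E" using ch by auto
  have E1: "?E ! ?m1 = p1" "?E ! Suc ?m1 = p2" "?E ! ?m2 = q1" "?E ! Suc ?m2 = q2"
    by (simp_all add: nth_append)
  have L: "?m1 < length ?E" "Suc ?m1 < length ?E" "?m2 < length ?E" "Suc ?m2 < length ?E" by simp_all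
  have posin: "pos ?E y tt \<in> {M, Suc M}"
    if "(y, tt, ss) \<in> {?E ! M, ?E ! Suc M}" "Suc M < length ?E" for y tt ss M
  proof -
    from that(1) consider "?E ! M = (y,tt,ss)" | "?E ! Suc M = (y,tt,ss)" by auto
    thus ?thesis
    proof cases
      case 1 thus ?thesis using pos_eq[OF E, of M y tt] that(2) by simp
    next
      case 2 thus ?thesis using pos_eq[OF E, of "Suc M" y tt] that(2) by simp
    qed
  qed
  have pT: "pos ?E a t \<in> {?m1, Suc ?m1}" "pos ?E b t \<in> {?m1, Suc ?m1}"
    using posin[of a t sa ?m1] posin[of b t sb ?m1] E1 L P by auto
  have pF: "pos ?E a (\<not>t) \<in> {?m2, Suc ?m2}" "pos ?E b (\<not>t) \<in> {?m2, Suc ?m2}"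
    using posin[of a "\<not>t" sa ?m2] posin[of b "\<not>t" sb ?m2] E1 L Q by auto
  have X: "Xv ?E c d = Xv ?D c d" if "c \<in> chords ?D" "d \<in> chords ?D" for c d
    by (rule Xv_transfer2[OF D E that _ _ pe mono]) (use that ch in auto)
  have outside: "pos ?E d t' \<notin> {?m1, Suc ?m1, ?m2, Suc ?m2}" if "d \<in> chords ?D" for d t'
  proof -
    have dE: "d \<in> chords ?E" using that ch by auto
    have da: "d \<noteq> a" "d \<noteq> b" using that a b by auto
    have n: "pos ?E d t' \<noteq> pos ?E y tt" if "y \<in> {a,b}" for y tt
      using pos_inj[OF E dE, of y t' tt] that da aE bE by auto
    have d1: "pos ?E a t \<noteq> pos ?E b t" "pos ?E a (\<not>t) \<noteq> pos ?E b (\<not>t)"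
      using pos_inj[OF E aE bE] ab by auto
    have "{?m1, Suc ?m1} = {pos ?E a t, pos ?E b t}" using pT d1 by auto
    moreover have "{?m2, Suc ?m2} = {pos ?E a (\<not>t), pos ?E b (\<not>t)}" using pF d1 by auto
    ultimately show ?thesis using n[of a] n[of b] by auto
  qed
  have Xab: "Xv ?E a d = Xv ?E b d" if "d \<in> chords ?D" for d
  proof -
    have dE: "d \<in> chords ?E" using that ch by auto
    have da: "a \<noteq> d" "b \<noteq> d" using that a b by auto
    have sep: "Suc ?m1 < ?m2" by simp
    have k: "cyc (pos ?E a True) r (pos ?E a False) = cyc (pos ?E b True) r (pos ?E b False)"
      if "r \<notin> {?m1, Suc ?m1, ?m2, Suc ?m2}" for r
    proof (cases t)
      case True
      show ?thesis
        by (rule cyc_blocks[where M="?m1" and N="?m2"]) (use pT pF that sep True in simp_all)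
    next
      case False
      show ?thesis
        by (rule cyc_blocks[where M="?m2" and N="?m1"]) (use pT pF that sep False in simp_all)
    qed
    show ?thesis unfolding Xv_cyc[OF E aE dE da(1)] Xv_cyc[OF E bE dE da(2)]
      using k outside[OF that] by simp
  qed
  have Xda: "Xv ?E d a = - Xv ?E a d" and Xdb: "Xv ?E d b = - Xv ?E b d" if "d \<in> chords ?D" for d
    using Xv_antisym[OF E aE, of d] Xv_antisym[OF E bE, of d] that ch a b by auto
  have Xba: "Xv ?E b a = - Xv ?E a b" using Xv_antisym[OF E aE bE ab] .
  show ?thesis unfolding F_eq ch
    by (rule FA_om2[OF finite_chords a b ab wab])
       (use w X Xab Xda Xdb Xba in \<open>auto simp: Xv_self\<close>)
qed



definition XL :: "nat \<Rightarrow> nat \<Rightarrow> nat \<Rightarrow> nat \<Rightarrow> int" where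
  "XL p q r s = of_bool (cyc p s q) - of_bool (cyc p r q)"

definition sg :: "bool \<Rightarrow> int" where "sg s = (if s then 1 else -1)"

definition off :: "bool \<Rightarrow> nat" where "off e = (if e then 0 else 1)"

lemma om3_local:
  fixes lT lM lB :: nat
  assumes perm: "(lT,lM,lB) \<in> {(0,2,4),(0,4,2),(2,0,4),(2,4,0),(4,0,2),(4,2,0)}"
    and c1: "(e1 = e2) = (sb = sc)" and c2: "(e2 = e3) = (sa = sb)"
  defines "xab \<equiv> XL (lT + off e1) (lM + off e2) (lT + off (\<not>e1)) (lB + off e3)"
    and "xac \<equiv> XL (lT + off e1) (lM + off e2) (lM + off (\<not>e2)) (lB + off (\<not>e3))"
    and "xbc \<equiv> XL (lT + off (\<not>e1)) (lB + off e3) (lM + off (\<not>e2)) (lB + off (\<not>e3))"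
    and "yab \<equiv> XL (lT + off (\<not>e1)) (lM + off (\<not>e2)) (lT + off e1) (lB + off (\<not>e3))"
    and "yac \<equiv> XL (lT + off (\<not>e1)) (lM + off (\<not>e2)) (lM + off e2) (lB + off e3)"
    and "ybc \<equiv> XL (lT + off e1) (lB + off (\<not>e3)) (lM + off e2) (lB + off e3)"
    and "wa \<equiv> sg sa" and "wb \<equiv> sg sb" and "wc \<equiv> sg sc"
  shows "xab * wb + xac * wc = yab * wb + yac * wc
    \<and> - xab * wa + xbc * wc = - yab * wa + ybc * wc
    \<and> - xac * wa - xbc * wb = - yac * wa - ybc * wb
    \<and> - xab * wa + xbc * wc = (xab * wb + xac * wc) + (- xac * wa - xbc * wb)
    \<and> (\<forall>s\<in>{1,-1}. (if xab = s then wb else 0) + (if xac = s then wc else 0)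
                 = (if yab = s then wb else 0) + (if yac = s then wc else 0))
    \<and> (\<forall>s\<in>{1,-1}. (if xab = s then - wa else 0) + (if xbc = s then wc else 0)
                 = (if yab = s then - wa else 0) + (if ybc = s then wc else 0))
    \<and> (\<forall>s\<in>{1,-1}. (if - xac = s then wa else 0) + (if - xbc = s then wb else 0)
                 = (if - yac = s then wa else 0) + (if - ybc = s then wb else 0))"
proof -
  have sb: "sb = (if e2 = e3 then sa else \<not> sa)" using c2 by auto
  have sc: "sc = (if e1 = e2 then sb else \<not> sb)" using c1 by auto
  show ?thesis
    using perm unfolding assms(4-) sc sb XL_def sg_def off_def cyc_def
    by (elim insertE emptyE; cases e1; cases e2; cases e3; cases sa; simp)
qed



lemma wr_val:
  assumes D: "gd_wf D" and m: "(c,True,s) \<in> set D"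
  shows "wr D c = sg s"
proof (cases s)
  case True thus ?thesis using m by (simp add: wr_def sg_def)
next
  case False
  have "(c,True,True) \<notin> set D"
  proof
    assume m2: "(c,True,True) \<in> set D"
    have inj: "inj_on (\<lambda>(l::nat,t::bool,s::bool). (l,t)) (set D)"
      using wf_dist[OF D] by (simp only: distinct_map)
    have "(c,True,True) = (c,True,s)" by (rule inj_onD[OF inj _ m2 m]) simp
    thus False using False by simp
  qed
  thus ?thesis using False by (simp add: wr_def sg_def)
qed

lemma in_chords: "(l,t,s) \<in> set D \<Longrightarrow> l \<in> chords D"
  unfolding chords_def by blast

lemma cyc_mid:
  assumes "x \<noteq> r" "x \<noteq> Suc r" "y \<noteq> r" "y \<noteq> Suc r"
  shows "cyc x (Suc r) y = cyc x r y"
  using assms unfolding cyc_def by auto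

lemma perm_cover:
  assumes perm: "(lT,lM,lB) \<in> {(0,2,4),(0,4,2),(2,0,4),(2,4,0),(4,0,2),(4,2,0)}" and j: "(j::nat) < 6"
  shows "j \<in> {lT + off e1, lT + off (\<not>e1), lM + off e2, lM + off (\<not>e2), lB + off e3, lB + off (\<not>e3)}"
proof -
  have j6: "j \<in> {0,1,2,3,4,5}" using j by auto
  have o: "{l + off e, l + off (\<not> e)} = {l, Suc l}" for l e by (cases e) (auto simp: off_def)
  have "{lT, Suc lT, lM, Suc lM, lB, Suc lB} = {0,1,2,3,4,5}"
    using perm by (elim insertE emptyE) auto
  hence "j \<in> {lT, Suc lT} \<union> {lM, Suc lM} \<union> {lB, Suc lB}" using j6 by auto
  thus ?thesis using o[of lT e1] o[of lM e2] o[of lB e3] by blast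
qed

lemma off_cases: "l + off e \<in> {l, Suc l}" "l + off (\<not> e) \<in> {l, Suc l}"
  by (auto simp: off_def)

lemma perm_pick:
  assumes "(T,M,B) \<in> {(f 0, f 2, f 4), (f 0, f 4, f 2), (f 2, f 0, f 4), (f 2, f 4, f 0), (f 4, f 0, f 2), (f 4, f 2, f 0)}"
  shows "\<exists>lT lM lB. (lT,lM,lB) \<in> {(0::nat,2::nat,4::nat),(0,4,2),(2,0,4),(2,4,0),(4,0,2),(4,2,0)} \<and> T = f lT \<and> M = f lM \<and> B = f lB"
  using assms by (elim insertE emptyE; simp; blast)

lemma place:
  assumes "bl = (if e then (p,q) else (q,p))" "bl = (D ! s l, D ! s (Suc l))"
  shows "D ! s (l + off e) = p" "D ! s (l + off (\<not>e)) = q"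
  using assms by (cases e; auto simp: off_def)+

lemma perm_small: "(lT,lM,lB) \<in> {(0::nat,2::nat,4::nat),(0,4,2),(2,0,4),(2,4,0),(4,0,2),(4,2,0)} \<Longrightarrow>
   lT \<in> {0,2,4} \<and> lM \<in> {0,2,4} \<and> lB \<in> {0,2,4}"
  by auto

section \<open>Omega 3\<close>

lemma F_om3:
  assumes D: "gd_wf (u @ [x1,y1] @ v @ [x2,y2] @ w @ [x3,y3] @ z)"
    and E: "gd_wf (u @ [y1,x1] @ v @ [y2,x2] @ w @ [y3,x3] @ z)"
    and ok: "omega3_ok (x1,y1) (x2,y2) (x3,y3)"
  shows "F_coef (u @ [y1,x1] @ v @ [y2,x2] @ w @ [y3,x3] @ z) C
       = F_coef (u @ [x1,y1] @ v @ [x2,y2] @ w @ [x3,y3] @ z) C"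
proof -
  let ?D = "u @ [x1,y1] @ v @ [x2,y2] @ w @ [x3,y3] @ z"
  let ?E = "u @ [y1,x1] @ v @ [y2,x2] @ w @ [y3,x3] @ z"
  define i1 where "i1 = length u"
  define i2 where "i2 = length u + 2 + length v"
  define i3 where "i3 = length u + 2 + length v + 2 + length w"
  define \<sigma> where "\<sigma> j = (if j < 2 then i1 + j else if j < 4 then i2 + (j - 2) else i3 + (j - 4))" for j
  have mono: "strict_mono \<sigma>" unfolding strict_mono_def \<sigma>_def i1_def i2_def i3_def by auto
  have lenD: "length ?D = i3 + 2 + length z" "length ?E = length ?D" by (simp_all add: i3_def)
  have sl: "\<sigma> j < length ?D" if "j < 6" for j
    using that unfolding \<sigma>_def lenD by (auto simp: i1_def i2_def i3_def)
  have nD: "?D ! \<sigma> 0 = x1" "?D ! \<sigma> 1 = y1" "?D ! \<sigma> 2 = x2" "?D ! \<sigma> 3 = y2" "?D ! \<sigma> 4 = x3" "?D ! \<sigma> 5 = y3"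
    by (simp_all add: \<sigma>_def i1_def i2_def i3_def nth_append)
  have nE: "?E ! \<sigma> 0 = y1" "?E ! \<sigma> 1 = x1" "?E ! \<sigma> 2 = y2" "?E ! \<sigma> 3 = x2" "?E ! \<sigma> 4 = y3" "?E ! \<sigma> 5 = x3"
    by (simp_all add: \<sigma>_def i1_def i2_def i3_def nth_append)
  have same: "?E ! j = ?D ! j" if "j \<notin> \<sigma> ` {..<6}" for j
  proof -
    have nk: "j \<noteq> \<sigma> k" if "k < 6" for k using that \<open>j \<notin> _\<close> by auto
    have "j \<notin> {i1, Suc i1, i2, Suc i2, i3, Suc i3}"
      using nk[of 0] nk[of 1] nk[of 2] nk[of 3] nk[of 4] nk[of 5] by (simp add: \<sigma>_def)
    thus ?thesis by (auto simp: i1_def i2_def i3_def nth_append nth_Cons split: nat.split)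
  qed
  obtain T M B a b c sa sb sc e1 e2 e3 where
    mem: "(T,M,B) \<in> {((x1,y1),(x2,y2),(x3,y3)),((x1,y1),(x3,y3),(x2,y2)),((x2,y2),(x1,y1),(x3,y3)),
                      ((x2,y2),(x3,y3),(x1,y1)),((x3,y3),(x1,y1),(x2,y2)),((x3,y3),(x2,y2),(x1,y1))}"
    and ne: "a \<noteq> b" "a \<noteq> c" "b \<noteq> c"
    and TT: "T = (if e1 then ((a,True,sa),(b,True,sb)) else ((b,True,sb),(a,True,sa)))"
    and MM: "M = (if e2 then ((a,False,sa),(c,True,sc)) else ((c,True,sc),(a,False,sa)))"
    and BB: "B = (if e3 then ((b,False,sb),(c,False,sc)) else ((c,False,sc),(b,False,sb)))"
    and c1: "(e1 = e2) = (sb = sc)" and c2: "(e2 = e3) = (sa = sb)"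
    using ok unfolding omega3_ok_def by (elim exE conjE) (rule that; assumption)
  define bD where "bD l = (?D ! \<sigma> l, ?D ! \<sigma> (Suc l))" for l
  define bE where "bE l = (?E ! \<sigma> l, ?E ! \<sigma> (Suc l))" for l
  have bk: "bD 0 = (x1,y1)" "bD 2 = (x2,y2)" "bD 4 = (x3,y3)"
    using nD by (simp_all add: bD_def numeral_eq_Suc)
  have bEk: "bE 0 = (y1,x1)" "bE 2 = (y2,x2)" "bE 4 = (y3,x3)"
    using nE by (simp_all add: bE_def numeral_eq_Suc)
  have bED: "bE l = (snd (bD l), fst (bD l))" if "l \<in> {0,2,4}" for l
    using that bk bEk by auto
  obtain lT lM lB where perm: "(lT,lM,lB) \<in> {(0,2,4),(0,4,2),(2,0,4),(2,4,0),(4,0,2),(4,2,0)}"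
    and TB: "T = bD lT" and MB: "M = bD lM" and BB': "B = bD lB"
    using perm_pick[of T M B bD] mem unfolding bk[symmetric] by blast
  have l024: "lT \<in> {0,2,4}" "lM \<in> {0,2,4}" "lB \<in> {0,2,4}" using perm_small[OF perm] by auto
  have swapE: "bE l = (if e then (q,p) else (p,q))" if "bD l = (if e then (p,q) else (q,p))" "l \<in> {0,2,4}" for l e p q
    using bED[OF that(2)] that(1) by (cases e) auto
  have Dk: "?D ! \<sigma> (lT + off e1) = (a,True,sa)" "?D ! \<sigma> (lT + off (\<not>e1)) = (b,True,sb)"
           "?D ! \<sigma> (lM + off e2) = (a,False,sa)" "?D ! \<sigma> (lM + off (\<not>e2)) = (c,True,sc)"
           "?D ! \<sigma> (lB + off e3) = (b,False,sb)" "?D ! \<sigma> (lB + off (\<not>e3)) = (c,False,sc)"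
    using place[OF TT[unfolded TB] bD_def] place[OF MM[unfolded MB] bD_def] place[OF BB[unfolded BB'] bD_def]
    by auto
  have Ek: "?E ! \<sigma> (lT + off (\<not>e1)) = (a,True,sa)" "?E ! \<sigma> (lT + off e1) = (b,True,sb)"
           "?E ! \<sigma> (lM + off (\<not>e2)) = (a,False,sa)" "?E ! \<sigma> (lM + off e2) = (c,True,sc)"
           "?E ! \<sigma> (lB + off (\<not>e3)) = (b,False,sb)" "?E ! \<sigma> (lB + off e3) = (c,False,sc)"
  proof -
    have t: "bE lT = (if \<not>e1 then ((a,True,sa),(b,True,sb)) else ((b,True,sb),(a,True,sa)))"
      using swapE[OF TT[unfolded TB] l024(1)] by simp
    have m: "bE lM = (if \<not>e2 then ((a,False,sa),(c,True,sc)) else ((c,True,sc),(a,False,sa)))"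
      using swapE[OF MM[unfolded MB] l024(2)] by simp
    have b: "bE lB = (if \<not>e3 then ((b,False,sb),(c,False,sc)) else ((c,False,sc),(b,False,sb)))"
      using swapE[OF BB[unfolded BB'] l024(3)] by simp
    show "?E ! \<sigma> (lT + off (\<not>e1)) = (a,True,sa)" "?E ! \<sigma> (lT + off e1) = (b,True,sb)"
           "?E ! \<sigma> (lM + off (\<not>e2)) = (a,False,sa)" "?E ! \<sigma> (lM + off e2) = (c,True,sc)"
           "?E ! \<sigma> (lB + off (\<not>e3)) = (b,False,sb)" "?E ! \<sigma> (lB + off e3) = (c,False,sc)"
      using place[OF t bE_def] place[OF m bE_def] place[OF b bE_def] by auto
  qed
  have lt6: "lT + off e < 6" "lM + off e < 6" "lB + off e < 6" for e
    using l024 by (auto simp: off_def)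
  have PD: "pos ?D y t = \<sigma> j" if "j < 6" "?D ! \<sigma> j = (y,t,s)" for y t s j
    using pos_eq[OF D, of "\<sigma> j" y t] sl[OF that(1)] that(2) by simp
  have PE: "pos ?E y t = \<sigma> j" if "j < 6" "?E ! \<sigma> j = (y,t,s)" for y t s j
    using pos_eq[OF E, of "\<sigma> j" y t] sl[OF that(1)] lenD that(2) by simp
  have pD: "pos ?D a True = \<sigma> (lT + off e1)" "pos ?D b True = \<sigma> (lT + off (\<not>e1))"
           "pos ?D a False = \<sigma> (lM + off e2)" "pos ?D c True = \<sigma> (lM + off (\<not>e2))"
           "pos ?D b False = \<sigma> (lB + off e3)" "pos ?D c False = \<sigma> (lB + off (\<not>e3))"
    using PD[OF lt6(1) Dk(1)] PD[OF lt6(1) Dk(2)] PD[OF lt6(2) Dk(3)] PD[OF lt6(2) Dk(4)]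
      PD[OF lt6(3) Dk(5)] PD[OF lt6(3) Dk(6)] by auto
  have pE: "pos ?E a True = \<sigma> (lT + off (\<not>e1))" "pos ?E b True = \<sigma> (lT + off e1)"
           "pos ?E a False = \<sigma> (lM + off (\<not>e2))" "pos ?E c True = \<sigma> (lM + off e2)"
           "pos ?E b False = \<sigma> (lB + off (\<not>e3))" "pos ?E c False = \<sigma> (lB + off e3)"
    using PE[OF lt6(1) Ek(1)] PE[OF lt6(1) Ek(2)] PE[OF lt6(2) Ek(3)] PE[OF lt6(2) Ek(4)]
      PE[OF lt6(3) Ek(5)] PE[OF lt6(3) Ek(6)] by auto
  have inD: "(a,True,sa) \<in> set ?D" "(b,True,sb) \<in> set ?D" "(c,True,sc) \<in> set ?D"
    using nth_mem[OF sl[OF lt6(1)[of e1]], unfolded Dk(1)] nth_mem[OF sl[OF lt6(1)[of "\<not>e1"]], unfolded Dk(2)]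
      nth_mem[OF sl[OF lt6(2)[of "\<not>e2"]], unfolded Dk(4)] by simp_all
  have setE: "set ?E = set ?D" by (simp add: insert_commute)
  have chE: "chords ?E = chords ?D" by (simp only: chords_def setE)
  have wE: "wr ?E = wr ?D" by (rule ext) (simp only: wr_def setE)
  have abc: "a \<in> chords ?D" "b \<in> chords ?D" "c \<in> chords ?D" using in_chords[OF inD(1)] in_chords[OF inD(2)] in_chords[OF inD(3)] by simp_all
  have abcE: "a \<in> chords ?E" "b \<in> chords ?E" "c \<in> chords ?E" using abc chE by auto
  have wv: "wr ?D a = sg sa" "wr ?D b = sg sb" "wr ?D c = sg sc"
    using wr_val[OF D inD(1)] wr_val[OF D inD(2)] wr_val[OF D inD(3)] by simp_all
  have XD: "Xv ?D a b = XL (lT + off e1) (lM + off e2) (lT + off (\<not>e1)) (lB + off e3)"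
           "Xv ?D a c = XL (lT + off e1) (lM + off e2) (lM + off (\<not>e2)) (lB + off (\<not>e3))"
           "Xv ?D b c = XL (lT + off (\<not>e1)) (lB + off e3) (lM + off (\<not>e2)) (lB + off (\<not>e3))"
    unfolding Xv_cyc[OF D abc(1,2) ne(1)] Xv_cyc[OF D abc(1,3) ne(2)] Xv_cyc[OF D abc(2,3) ne(3)]
      pD XL_def cyc_mono[OF mono] by simp_all
  have XE: "Xv ?E a b = XL (lT + off (\<not>e1)) (lM + off (\<not>e2)) (lT + off e1) (lB + off (\<not>e3))"
           "Xv ?E a c = XL (lT + off (\<not>e1)) (lM + off (\<not>e2)) (lM + off e2) (lB + off e3)"
           "Xv ?E b c = XL (lT + off e1) (lB + off (\<not>e3)) (lM + off e2) (lB + off e3)"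
    unfolding Xv_cyc[OF E abcE(1,2) ne(1)] Xv_cyc[OF E abcE(1,3) ne(2)] Xv_cyc[OF E abcE(2,3) ne(3)]
      pE XL_def cyc_mono[OF mono] by simp_all
  note loc = om3_local[OF perm c1 c2, folded XD XE wv]
  have \<sigma>S: "\<sigma> (Suc l) = Suc (\<sigma> l)" if "l \<in> {0,2,4}" for l
    using that by (auto simp: \<sigma>_def)
  have cover: "\<sigma> j \<in> {pos ?D a True, pos ?D b True, pos ?D a False, pos ?D c True, pos ?D b False, pos ?D c False}"
    if "j < 6" for j
    using perm_cover[OF perm that, of e1 e2 e3] unfolding pD by auto
  have other: "pos ?D d t \<noteq> \<sigma> j" if "d \<in> chords ?D" "d \<notin> {a,b,c}" "j < 6" for d t j
  proof
    assume h: "pos ?D d t = \<sigma> j"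
    from cover[OF that(3)] h pos_inj[OF D that(1) abc(1)] pos_inj[OF D that(1) abc(2)] pos_inj[OF D that(1) abc(3)]
      that(2) show False by auto
  qed
  have posE: "pos ?E d t = pos ?D d t" if "d \<in> chords ?D" "d \<notin> {a,b,c}" for d t
  proof -
    have "pos ?D d t \<notin> \<sigma> ` {..<6}" using other[OF that] by auto
    hence "?E ! pos ?D d t = ?D ! pos ?D d t" by (rule same)
    thus ?thesis using pos_eq[OF E, of "pos ?D d t" d t] pos_props[OF D that(1), of t] lenD by simp
  qed
  have rho: "cyc (pos ?D d True) (\<sigma> (l + off e)) (pos ?D d False) = cyc (pos ?D d True) (\<sigma> l) (pos ?D d False)"
    if "d \<in> chords ?D" "d \<notin> {a,b,c}" "l \<in> {lT,lM,lB}" for d l e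
  proof (cases e)
    case True thus ?thesis by (simp add: off_def)
  next
    case False
    have l: "l \<in> {0,2,4}" using that(3) l024 by auto
    have l6: "l < 6" "Suc l < 6" using l by auto
    have "cyc (pos ?D d True) (Suc (\<sigma> l)) (pos ?D d False) = cyc (pos ?D d True) (\<sigma> l) (pos ?D d False)"
      by (rule cyc_mid) (use other[OF that(1,2) l6(1)] other[OF that(1,2) l6(2)] \<sigma>S[OF l] in auto)
    thus ?thesis using False \<sigma>S[OF l] by (simp add: off_def)
  qed
  have rel: "Xv ?D d b = Xv ?D d a + Xv ?D d c" if "d \<in> chords ?D - {a,b,c}" for d
  proof -
    have d: "d \<in> chords ?D" "d \<notin> {a,b,c}" using that by auto
    have n: "d \<noteq> a" "d \<noteq> b" "d \<noteq> c" using that by auto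
    show ?thesis
      unfolding Xv_cyc[OF D d(1) abc(1) n(1)] Xv_cyc[OF D d(1) abc(2) n(2)] Xv_cyc[OF D d(1) abc(3) n(3)] pD
      using rho[OF d, of lT] rho[OF d, of lM] rho[OF d, of lB] by simp
  qed
  have XEdx: "Xv ?E d x = Xv ?D d x" if "d \<in> chords ?D - {a,b,c}" "x \<in> {a,b,c}" for d x
  proof -
    have d: "d \<in> chords ?D" "d \<notin> {a,b,c}" using that by auto
    have dE: "d \<in> chords ?E" using d chE by simp
    have n: "d \<noteq> a" "d \<noteq> b" "d \<noteq> c" using that by auto
    have eq: "Xv ?E d a = Xv ?D d a" "Xv ?E d b = Xv ?D d b" "Xv ?E d c = Xv ?D d c"
      unfolding Xv_cyc[OF D d(1) abc(1) n(1)] Xv_cyc[OF D d(1) abc(2) n(2)] Xv_cyc[OF D d(1) abc(3) n(3)]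
        Xv_cyc[OF E dE abcE(1) n(1)] Xv_cyc[OF E dE abcE(2) n(2)] Xv_cyc[OF E dE abcE(3) n(3)] pD pE posE[OF d]
      using rho[OF d, of lT] rho[OF d, of lM] rho[OF d, of lB] by simp_all
    show ?thesis using eq that by auto
  qed
  have XEoo: "Xv ?E d d' = Xv ?D d d'" if "d \<in> chords ?D - {a,b,c}" "d' \<in> chords ?D - {a,b,c}" for d d'
  proof (cases "d = d'")
    case True thus ?thesis by (simp add: Xv_self)
  next
    case False
    have d: "d \<in> chords ?D" "d \<notin> {a,b,c}" "d' \<in> chords ?D" "d' \<notin> {a,b,c}" using that by auto
    show ?thesis
      unfolding Xv_cyc[OF D d(1) d(3) False] Xv_cyc[OF E d(1)[folded chE] d(3)[folded chE] False]
        posE[OF d(1,2)] posE[OF d(3,4)] ..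
  qed
  have Xo: "Xv ?E d e = Xv ?D d e"
    if dA: "d \<in> chords ?D" "e \<in> chords ?D" and nt: "\<not> (d \<in> {a,b,c} \<and> e \<in> {a,b,c})" for d e
  proof -
    have dd: "d \<in> chords ?D" "e \<in> chords ?D" using dA .
    consider "d \<notin> {a,b,c}" "e \<notin> {a,b,c}" | "d \<notin> {a,b,c}" "e \<in> {a,b,c}" | "d \<in> {a,b,c}" "e \<notin> {a,b,c}"
      using nt by blast
    thus ?thesis
    proof cases
      case 1 thus ?thesis using XEoo dd by auto
    next
      case 2 thus ?thesis using XEdx dd by auto
    next
      case 3
      have ne': "d \<noteq> e" using 3 by auto
      have "Xv ?E d e = - Xv ?E e d" using Xv_antisym[OF E, of e d] dd chE ne' by auto
      also have "\<dots> = - Xv ?D e d" using XEdx[of e d] 3 dd by auto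
      also have "\<dots> = Xv ?D d e" using Xv_antisym[OF D, of d e] dd ne' by auto
      finally show ?thesis .
    qed
  qed
  have anti: "Xv ?D x d = - Xv ?D d x" if "d \<in> chords ?D - {a,b,c}" "x \<in> {a,b,c}" for d x
    using Xv_antisym[OF D, of d x] that abc by auto
  have anD: "Xv ?D b a = - Xv ?D a b" "Xv ?D c a = - Xv ?D a c" "Xv ?D c b = - Xv ?D b c"
    using Xv_antisym[OF D abc(1) abc(2) ne(1)] Xv_antisym[OF D abc(1) abc(3) ne(2)]
      Xv_antisym[OF D abc(2) abc(3) ne(3)] by simp_all
  have anE: "Xv ?E b a = - Xv ?E a b" "Xv ?E c a = - Xv ?E a c" "Xv ?E c b = - Xv ?E b c"
    using Xv_antisym[OF E abcE(1) abcE(2) ne(1)] Xv_antisym[OF E abcE(1) abcE(3) ne(2)]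
      Xv_antisym[OF E abcE(2) abcE(3) ne(3)] by simp_all
  show ?thesis unfolding F_eq chE wE
    apply (rule FA_om3[OF finite_chords abc ne Xo rel anti Xv_self Xv_self Xv_self Xv_self Xv_self Xv_self
         anD anE Xv_range Xv_range Xv_range Xv_range Xv_range Xv_range])
    using loc by blast+
qed



lemma F_move:
  assumes "gd_move D E" "gd_wf D" "gd_wf E"
  shows "F_coef E C = F_coef D C"
  using assms
proof (induction rule: gd_move.induct)
  case rot show ?case by (rule F_rot[OF rot.prems])
next
  case ren show ?case by (rule F_ren[OF ren.prems ren.hyps])
next
  case om1 show ?case by (rule F_om1[OF om1.prems om1.hyps])
next
  case om2 show ?case by (rule F_om2[OF om2.prems om2.hyps])
next
  case om3 show ?case by (rule F_om3[OF om3.prems om3.hyps])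
qed

lemma F_equiv:
  assumes "gd_equiv D E"
  shows "F_coef E C = F_coef D C"
  using assms unfolding gd_equiv_def
proof (induction rule: rtranclp_induct)
  case base thus ?case by simp
next
  case (step y z)
  hence "F_coef z C = F_coef y C" using F_move[of y z C] F_move[of z y C] by auto
  thus ?case using step.IH by simp
qed

lemma card_bound:
  fixes g :: "nat \<Rightarrow> 'b" and w :: "nat \<Rightarrow> int"
  assumes fA: "finite A" and fS: "finite S" and w: "\<And>c. \<bar>w c\<bar> = 1"
  shows "(\<Sum>C\<in>S. \<bar>\<Sum>c\<in>{c\<in>A. g c = C}. w c\<bar>) \<le> int (card A)"
proof -
  have "(\<Sum>C\<in>S. \<bar>\<Sum>c\<in>{c\<in>A. g c = C}. w c\<bar>) \<le> (\<Sum>C\<in>S. \<Sum>c\<in>{c\<in>A. g c = C}. \<bar>w c\<bar>)"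
    by (intro sum_mono sum_abs)
  also have "\<dots> = (\<Sum>C\<in>S. \<Sum>c\<in>A. if g c = C then 1 else 0)"
    by (simp only: sum.inter_filter[OF fA] w)
  also have "\<dots> = (\<Sum>c\<in>A. \<Sum>C\<in>S. if g c = C then 1 else 0)"
    by (rule sum.swap)
  also have "\<dots> = (\<Sum>c\<in>A. if g c \<in> S then 1 else 0)"
    using fS by (simp add: sum.delta)
  also have "\<dots> \<le> (\<Sum>c\<in>A. 1)" by (intro sum_mono) simp
  also have "\<dots> = int (card A)" by simp
  finally show ?thesis .
qed

theorem proposition5p3:
  assumes "gd_wf D"
  shows "(\<Sum>C\<in>F_classes D - {lcls lzero}. \<bar>F_coef D C\<bar>) \<le> int (real_crossing_number (virtual_knot D))"
proof -
  let ?K = "virtual_knot D"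
  have DK: "D \<in> ?K" using assms by (simp add: virtual_knot_def gd_equiv_def)
  have ex: "\<exists>n. \<exists>E\<in>?K. card (chords E) = n" using DK by blast
  obtain E where E: "E \<in> ?K" "card (chords E) = real_crossing_number ?K"
    using LeastI_ex[OF ex] unfolding real_crossing_number_def by blast
  have eq: "F_coef D C = F_coef E C" for C
    using E(1) F_equiv[of D E C] by (simp add: virtual_knot_def)
  let ?S = "F_classes D - {lcls lzero}"
  have fS: "finite ?S" unfolding F_classes_def using finite_chords by simp
  have "(\<Sum>C\<in>?S. \<bar>F_coef D C\<bar>) = (\<Sum>C\<in>?S. \<bar>\<Sum>c\<in>{c\<in>chords E. lcls (gpoly E c) = C}. wr E c\<bar>)"
    unfolding eq by (intro sum.cong) (auto simp: F_coef_def)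
  also have "\<dots> \<le> int (card (chords E))"
    by (rule card_bound[OF finite_chords fS]) (simp add: wr_def)
  finally show ?thesis using E(2) by simp
qed

end
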